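(* For every integer $t \ge 4$, there exists a doubly saturated $R(4,t)$-good graph on $6t-11$ vertices.
   Context: All graphs are finite and simple. For integers $s,t$, a graph $G$ is \emph{$R(s,t)$-good} if $G$ contains no clique of size $s$ and no independent set of size $t$. A graph $G$ is \emph{doubly saturated $R(s,t)$-good} if (i) $G$ is $R(s,t)$-good; (ii) for every pair of non-adjacent distinct vertices $u,v$, the graph $G + uv$ is not $R(s,t)$-good; (iii) for every edge $uv$ of $G$, the graph $G - uv$ is not $R(s,t)$-good; and (iv) $G$ is neither a complete graph nor an edgeless graph (equivalently, neither $G$ nor its complement $\overline{G}$ is complete). *)

theory Defs
  imports Main
begin

definition simple_graph :: "'a set \<Rightarrow> ('a \<Rightarrow> 'a \<Rightarrow> bool) \<Rightarrow> bool" where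
  "simple_graph V E \<longleftrightarrow> finite V \<and> (\<forall>u\<in>V. \<forall>v\<in>V. E u v \<longrightarrow> E v u) \<and> (\<forall>v\<in>V. \<not> E v v)"

definition is_clique :: "'a set \<Rightarrow> ('a \<Rightarrow> 'a \<Rightarrow> bool) \<Rightarrow> 'a set \<Rightarrow> bool" where
  "is_clique V E K \<longleftrightarrow> K \<subseteq> V \<and> (\<forall>u\<in>K. \<forall>v\<in>K. u \<noteq> v \<longrightarrow> E u v)"

definition is_indep :: "'a set \<Rightarrow> ('a \<Rightarrow> 'a \<Rightarrow> bool) \<Rightarrow> 'a set \<Rightarrow> bool" where
  "is_indep V E I \<longleftrightarrow> I \<subseteq> V \<and> (\<forall>u\<in>I. \<forall>v\<in>I. u \<noteq> v \<longrightarrow> \<not> E u v)"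

definition R_good :: "nat \<Rightarrow> nat \<Rightarrow> 'a set \<Rightarrow> ('a \<Rightarrow> 'a \<Rightarrow> bool) \<Rightarrow> bool" where
  "R_good s t V E \<longleftrightarrow>
     \<not> (\<exists>K. is_clique V E K \<and> card K = s) \<and> \<not> (\<exists>I. is_indep V E I \<and> card I = t)"

definition add_edge :: "('a \<Rightarrow> 'a \<Rightarrow> bool) \<Rightarrow> 'a \<Rightarrow> 'a \<Rightarrow> ('a \<Rightarrow> 'a \<Rightarrow> bool)" where
  "add_edge E u v = (\<lambda>x y. E x y \<or> (x = u \<and> y = v) \<or> (x = v \<and> y = u))"

definition del_edge :: "('a \<Rightarrow> 'a \<Rightarrow> bool) \<Rightarrow> 'a \<Rightarrow> 'a \<Rightarrow> ('a \<Rightarrow> 'a \<Rightarrow> bool)" where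
  "del_edge E u v = (\<lambda>x y. E x y \<and> \<not> (x = u \<and> y = v) \<and> \<not> (x = v \<and> y = u))"

definition complete_graph :: "'a set \<Rightarrow> ('a \<Rightarrow> 'a \<Rightarrow> bool) \<Rightarrow> bool" where
  "complete_graph V E \<longleftrightarrow> (\<forall>u\<in>V. \<forall>v\<in>V. u \<noteq> v \<longrightarrow> E u v)"

definition edgeless_graph :: "'a set \<Rightarrow> ('a \<Rightarrow> 'a \<Rightarrow> bool) \<Rightarrow> bool" where
  "edgeless_graph V E \<longleftrightarrow> (\<forall>u\<in>V. \<forall>v\<in>V. \<not> E u v)"

definition doubly_saturated_R_good :: "nat \<Rightarrow> nat \<Rightarrow> 'a set \<Rightarrow> ('a \<Rightarrow> 'a \<Rightarrow> bool) \<Rightarrow> bool" where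
  "doubly_saturated_R_good s t V E \<longleftrightarrow>
     R_good s t V E
   \<and> (\<forall>u\<in>V. \<forall>v\<in>V. u \<noteq> v \<and> \<not> E u v \<longrightarrow> \<not> R_good s t V (add_edge E u v))
   \<and> (\<forall>u\<in>V. \<forall>v\<in>V. E u v \<longrightarrow> \<not> R_good s t V (del_edge E u v))
   \<and> \<not> complete_graph V E \<and> \<not> edgeless_graph V E"

end

theory Submission
  imports Defs
begin

definition fd :: "nat \<Rightarrow> nat \<Rightarrow> nat \<Rightarrow> int" where
  "fd m u v = (int v - int u) mod (6 * int m + 1)"

definition Aj :: "nat \<Rightarrow> int \<Rightarrow> bool" where
  "Aj m d \<longleftrightarrow> d = int m \<or> d = 5 * int m + 1 \<or> (2 * int m + 1 \<le> d \<and> d \<le> 4 * int m)"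

definition Gr :: "nat \<Rightarrow> nat \<Rightarrow> nat \<Rightarrow> bool" where
  "Gr m u v \<longleftrightarrow> Aj m (fd m u v)"

definition wv :: "nat \<Rightarrow> nat \<Rightarrow> int \<Rightarrow> nat" where
  "wv m u j = nat ((int u + j) mod (6 * int m + 1))"

lemma wv_int: "int (wv m u j) = (int u + j) mod (6 * int m + 1)"
  unfolding wv_def by simp

lemma wv_lt: "wv m u j < 6*m+1"
proof -
  have p: "0 < 6 * int m + 1" by simp
  have "(int u + j) mod (6 * int m + 1) < 6 * int m + 1" by (rule pos_mod_bound[OF p])
  then show ?thesis using wv_int[of m u j] by linarith
qed

lemma fd_wv: "u < 6*m+1 \<Longrightarrow> fd m u (wv m u j) = j mod (6 * int m + 1)"
  unfolding fd_def wv_int by (simp add: mod_diff_left_eq)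

lemma fd_ww: "fd m (wv m u a) (wv m u b) = (b - a) mod (6 * int m + 1)"
  unfolding fd_def wv_int by (simp add: mod_diff_eq)

lemma wv_fd: "u < 6*m+1 \<Longrightarrow> v < 6*m+1 \<Longrightarrow> wv m u (fd m u v) = v"
proof -
  assume a: "u < 6*m+1" "v < 6*m+1"
  have "int (wv m u (fd m u v)) = (int u + (int v - int u) mod (6 * int m + 1)) mod (6 * int m + 1)"
    unfolding wv_int fd_def by simp
  also have "\<dots> = (int u + (int v - int u)) mod (6 * int m + 1)" by (simp add: mod_add_right_eq)
  also have "\<dots> = int v" using a by simp
  finally show ?thesis by simp
qed

lemma wv_0: "u < 6*m+1 \<Longrightarrow> wv m u 0 = u"
  unfolding wv_def by simp

lemma fd_range: "0 \<le> fd m u v" "fd m u v < 6 * int m + 1"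
proof -
  have p: "0 < 6 * int m + 1" by simp
  show "0 \<le> fd m u v" unfolding fd_def by simp
  show "fd m u v < 6 * int m + 1" unfolding fd_def by (rule pos_mod_bound[OF p])
qed

lemma fd_zero: "u < 6*m+1 \<Longrightarrow> v < 6*m+1 \<Longrightarrow> fd m u v = 0 \<longleftrightarrow> u = v"
  using wv_fd[of u m v] wv_0[of u m] by (metis fd_def diff_self mod_0)

lemma mod_eval: "(n::int) > 0 \<Longrightarrow> -n \<le> x \<Longrightarrow> x < n \<Longrightarrow> x mod n = (if x < 0 then x + n else x)"
proof -
  assume a: "n > 0" "-n \<le> x" "x < n"
  show ?thesis
  proof (cases "x < 0")
    case True
    have "(x + n) mod n = x + n" using a True by (intro mod_pos_pos_trivial) auto
    then show ?thesis using True by simp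
  next
    case False
    then show ?thesis using a by simp
  qed
qed

lemma fd_swap: "u < 6*m+1 \<Longrightarrow> v < 6*m+1 \<Longrightarrow> u \<noteq> v \<Longrightarrow> fd m v u = 6 * int m + 1 - fd m u v"
proof -
  assume a: "u < 6*m+1" "v < 6*m+1" "u \<noteq> v"
  have "fd m v u = (int u - int v) mod (6 * int m + 1)" unfolding fd_def ..
  moreover have "fd m u v = (int v - int u) mod (6 * int m + 1)" unfolding fd_def ..
  ultimately show ?thesis using a by (auto simp: mod_eval)
qed

lemma inj_wv: assumes "u < 6*m+1" "S \<subseteq> {lo..lo + 6 * int m}" shows "inj_on (wv m u) S"
proof
  fix j k assume jk: "j \<in> S" "k \<in> S" "wv m u j = wv m u k"
  then have "j mod (6 * int m + 1) = k mod (6 * int m + 1)" using fd_wv[OF assms(1)] by metis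
  then have "(j - k) mod (6 * int m + 1) = 0" by (simp add: mod_diff_eq[symmetric])
  moreover have "j \<in> {lo..lo + 6 * int m}" "k \<in> {lo..lo + 6 * int m}" using jk assms(2) by auto
  then have "-(6 * int m) \<le> j - k" "j - k < 6 * int m + 1" by auto
  ultimately show "j = k" by (auto simp: mod_eval split: if_splits)
qed

lemma Aj_swap: "0 < d \<Longrightarrow> d < 6 * int m + 1 \<Longrightarrow> Aj m (6 * int m + 1 - d) = Aj m d"
  unfolding Aj_def by auto

lemma Aj_zero: "m \<ge> 1 \<Longrightarrow> \<not> Aj m 0"
  unfolding Aj_def by auto

lemma Aj_abs: assumes "0 \<le> x" "x < 6 * int m + 1" "0 \<le> y" "y < 6 * int m + 1" "x \<noteq> y"
  shows "Aj m ((y - x) mod (6 * int m + 1)) = Aj m \<bar>y - x\<bar>"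
proof (cases "x < y")
  case True
  then show ?thesis using assms by (simp add: mod_eval)
next
  case False
  then have "(y - x) mod (6 * int m + 1) = 6 * int m + 1 - \<bar>y - x\<bar>" using assms by (simp add: mod_eval)
  then show ?thesis using Aj_swap[of "\<bar>y - x\<bar>" m] assms False by simp
qed

lemma Gr_sym: "u < 6*m+1 \<Longrightarrow> v < 6*m+1 \<Longrightarrow> Gr m u v = Gr m v u"
proof (cases "u = v")
  case False
  assume a: "u < 6*m+1" "v < 6*m+1"
  have "fd m u v \<noteq> 0" using fd_zero[OF a] False by simp
  then have "0 < fd m u v" using fd_range[of m u v] by simp
  then show ?thesis unfolding Gr_def using fd_swap[OF a False] Aj_swap[of "fd m u v" m] fd_range[of m u v] by simp
qed simp

lemma Gr_irrefl: "m \<ge> 1 \<Longrightarrow> \<not> Gr m u u"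
  unfolding Gr_def fd_def using Aj_zero by simp

lemma simple: "m \<ge> 1 \<Longrightarrow> simple_graph {0..<6*m+1} (Gr m)"
  unfolding simple_graph_def using Gr_sym Gr_irrefl by auto

lemma unsorted4: assumes "m \<ge> 1" "0 < x" "x < 6*int m+1" "0 < y" "y < 6*int m+1" "0 < z" "z < 6*int m+1"
  "x \<noteq> y" "x \<noteq> z" "y \<noteq> z" "Aj m x" "Aj m y" "Aj m z" "Aj m \<bar>y-x\<bar>" "Aj m \<bar>z-x\<bar>" "Aj m \<bar>z-y\<bar>"
  shows False
  using assms unfolding Aj_def by smt

lemma fd_pair: assumes "a < 6*m+1" "b < 6*m+1" "c < 6*m+1"
  shows "fd m b c = (fd m a c - fd m a b) mod (6 * int m + 1)"
  using fd_ww[of m a "fd m a b" "fd m a c"] wv_fd[OF assms(1,2)] wv_fd[OF assms(1,3)] by simp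

lemma noK4: assumes m: "m \<ge> 1" and K: "is_clique {0..<6*m+1} (Gr m) K" and c: "card K = 4"
  shows False
proof -
  have KV: "K \<subseteq> {0..<6*m+1}" using K unfolding is_clique_def by simp
  have adj: "\<And>p q. p \<in> K \<Longrightarrow> q \<in> K \<Longrightarrow> p \<noteq> q \<Longrightarrow> Gr m p q" using K unfolding is_clique_def by simp
  have "K \<noteq> {}" using c by auto
  then obtain a where a: "a \<in> K" by auto
  have "card (K - {a}) = 3" using c a by (simp add: card_Diff_singleton)
  then obtain b c d where bcd: "K - {a} = {b, c, d}" "b \<noteq> c" "c \<noteq> d" "b \<noteq> d" by (auto simp: card_3_iff)
  have in_K: "b \<in> K" "c \<in> K" "d \<in> K" "a \<noteq> b" "a \<noteq> c" "a \<noteq> d" using bcd by auto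
  have lt: "a < 6*m+1" "b < 6*m+1" "c < 6*m+1" "d < 6*m+1" using KV a in_K by auto
  define x where "x = fd m a b"
  define y where "y = fd m a c"
  define z where "z = fd m a d"
  have r: "0 \<le> x" "x < 6*int m+1" "0 \<le> y" "y < 6*int m+1" "0 \<le> z" "z < 6*int m+1"
    unfolding x_def y_def z_def using fd_range by auto
  have nz: "x \<noteq> 0" "y \<noteq> 0" "z \<noteq> 0" unfolding x_def y_def z_def
    using fd_zero[OF lt(1) lt(2)] fd_zero[OF lt(1) lt(3)] fd_zero[OF lt(1) lt(4)] in_K by auto
  have w: "b = wv m a x" "c = wv m a y" "d = wv m a z" unfolding x_def y_def z_def
    using wv_fd[OF lt(1) lt(2)] wv_fd[OF lt(1) lt(3)] wv_fd[OF lt(1) lt(4)] by auto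
  have ne: "x \<noteq> y" "x \<noteq> z" "y \<noteq> z" using w bcd by auto
  have g: "Gr m a b" "Gr m a c" "Gr m a d" "Gr m b c" "Gr m b d" "Gr m c d"
    using adj[OF a in_K(1)] adj[OF a in_K(2)] adj[OF a in_K(3)] adj[OF in_K(1) in_K(2)] adj[OF in_K(1) in_K(3)]
      adj[OF in_K(2) in_K(3)] in_K bcd by auto
  have e1: "Aj m x" "Aj m y" "Aj m z" using g unfolding x_def y_def z_def Gr_def by auto
  have e2: "Aj m ((y - x) mod (6 * int m + 1))" "Aj m ((z - x) mod (6 * int m + 1))" "Aj m ((z - y) mod (6 * int m + 1))"
    using g(4-6) fd_pair[OF lt(1) lt(2) lt(3)] fd_pair[OF lt(1) lt(2) lt(4)] fd_pair[OF lt(1) lt(3) lt(4)]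
    unfolding x_def y_def z_def Gr_def by auto
  have e3: "Aj m \<bar>y-x\<bar>" "Aj m \<bar>z-x\<bar>" "Aj m \<bar>z-y\<bar>"
    using e2 Aj_abs[OF r(1,2,3,4) ne(1)] Aj_abs[OF r(1,2,5,6) ne(2)] Aj_abs[OF r(3,4,5,6) ne(3)] by auto
  show False using unsorted4[OF m _ r(2) _ r(4) _ r(6) ne e1 e3] r nz by auto
qed

lemma fd_add: "fd m a c = (fd m a b + fd m b c) mod (6 * int m + 1)"
proof -
  have "(int c - int a) = (int b - int a) + (int c - int b)" by simp
  then show ?thesis unfolding fd_def by (metis mod_add_eq)
qed

lemma noIndep: assumes m: "m \<ge> 1" and I: "is_indep {0..<6*m+1} (Gr m) I" and c: "card I = m + 2"
  shows False
proof -
  have IV: "I \<subseteq> {0..<6*m+1}" using I unfolding is_indep_def by simp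
  have fin: "finite I" using IV finite_subset by blast
  have na: "\<And>p q. p \<in> I \<Longrightarrow> q \<in> I \<Longrightarrow> p \<noteq> q \<Longrightarrow> \<not> Aj m (fd m p q)"
    using I unfolding is_indep_def Gr_def by simp
  have lt: "\<And>p. p \<in> I \<Longrightarrow> p < 6*m+1" using IV by auto
  have nz: "\<And>p q. p \<in> I \<Longrightarrow> q \<in> I \<Longrightarrow> p \<noteq> q \<Longrightarrow> fd m p q \<noteq> 0"
    using fd_zero lt by blast
  have fr: "\<And>p q. 0 \<le> fd m p q \<and> fd m p q < 6 * int m + 1" using fd_range by auto
  have far: "\<And>p q. p \<in> I \<Longrightarrow> q \<in> I \<Longrightarrow> p \<noteq> q \<Longrightarrow>
      (1 \<le> fd m p q \<and> fd m p q \<le> 2 * int m \<and> fd m p q \<noteq> int m) \<or> (4 * int m + 1 \<le> fd m p q \<and> fd m p q \<noteq> 5 * int m + 1)"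
  proof -
    fix p q assume a: "p \<in> I" "q \<in> I" "p \<noteq> q"
    show "?thesis p q" using na[OF a] nz[OF a] fr[of p q] unfolding Aj_def by auto
  qed
  have "I \<noteq> {}" using c by auto
  then obtain c0 where c0: "c0 \<in> I" by auto
  define S where "S = {q \<in> I. fd m q c0 \<le> 2 * int m}"
  have c0S: "c0 \<in> S" unfolding S_def fd_def using c0 by simp
  have finS: "finite S" unfolding S_def using fin by simp
  define M where "M = Max ((\<lambda>q. fd m q c0) ` S)"
  have "M \<in> (\<lambda>q. fd m q c0) ` S" unfolding M_def using finS c0S by (intro Max_in) auto
  then obtain c where cS: "c \<in> S" and cM: "fd m c c0 = M" by auto
  have maxc: "\<And>q. q \<in> S \<Longrightarrow> fd m q c0 \<le> fd m c c0" unfolding cM M_def using finS by auto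
  have cI: "c \<in> I" and cc0: "fd m c c0 \<le> 2 * int m" using cS unfolding S_def by auto
  have win: "fd m c q \<le> 2 * int m" if qI: "q \<in> I" for q
  proof (rule ccontr)
    assume h: "\<not> fd m c q \<le> 2 * int m"
    then have qc: "q \<noteq> c" unfolding fd_def by auto
    have f1: "4 * int m + 1 \<le> fd m c q" using far[OF cI qI qc[symmetric]] h by auto
    have f2: "fd m q c = 6 * int m + 1 - fd m c q" using fd_swap[OF lt[OF cI] lt[OF qI] qc[symmetric]] .
    have f3: "fd m q c0 = fd m q c + fd m c c0"
      using fd_add[of m q c0 c] f1 f2 cc0 fr[of c q] fr[of c c0] by (simp add: mod_eval)
    have f4: "q \<noteq> c0" using f3 f2 fr[of c q] fr[of c c0] unfolding fd_def by auto
    have "fd m q c0 \<le> 2 * int m" using far[OF qI c0 f4] f3 f2 fr[of c q] fr[of c c0] f1 cc0 by auto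
    then have "q \<in> S" unfolding S_def using qI by auto
    then have "fd m q c0 \<le> fd m c c0" by (rule maxc)
    then show False using f3 f2 fr[of c q] by auto
  qed
  define g where "g q = (let r = fd m c q in if r < int m then r else if r = 2 * int m then int m else r - int m)" for q
  have gI: "g ` I \<subseteq> {0..int m}"
  proof
    fix x assume "x \<in> g ` I"
    then obtain q where q: "q \<in> I" "x = g q" by auto
    show "x \<in> {0..int m}" using win[OF q(1)] fr[of c q] q(2) unfolding g_def Let_def by auto
  qed
  have inj: "inj_on g I"
  proof
    fix p q assume pq: "p \<in> I" "q \<in> I" "g p = g q"
    show "p = q"
    proof (rule ccontr)
      assume ne: "p \<noteq> q"
      have rs: "fd m c p \<noteq> fd m c q" using wv_fd[OF lt[OF cI] lt[OF pq(1)]] wv_fd[OF lt[OF cI] lt[OF pq(2)]] ne by metis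
      have e: "fd m p q = (fd m c q - fd m c p) mod (6 * int m + 1)" using fd_pair[OF lt[OF cI] lt[OF pq(1)] lt[OF pq(2)]] .
      have "\<not> Aj m \<bar>fd m c q - fd m c p\<bar>"
        using na[OF pq(1,2) ne] Aj_abs[of "fd m c p" m "fd m c q"] fr rs e by auto
      then have "\<bar>fd m c q - fd m c p\<bar> \<noteq> int m" unfolding Aj_def by auto
      then show False using pq(3) rs win[OF pq(1)] win[OF pq(2)] fr[of c p] fr[of c q] unfolding g_def Let_def
        by (auto split: if_splits)
    qed
  qed
  have "card I \<le> card {0..int m}" using card_inj_on_le[OF inj gI] by simp
  then show False using c by simp
qed

lemma Aj_mod_abs: "-(6 * int m + 1) < x \<Longrightarrow> x < 6 * int m + 1 \<Longrightarrow> Aj m (x mod (6 * int m + 1)) = Aj m \<bar>x\<bar>"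
proof -
  assume a: "-(6 * int m + 1) < x" "x < 6 * int m + 1"
  show ?thesis
  proof (cases "x < 0")
    case True
    then have "x mod (6 * int m + 1) = 6 * int m + 1 - \<bar>x\<bar>" using a by (simp add: mod_eval)
    then show ?thesis using Aj_swap[of "\<bar>x\<bar>" m] a True by simp
  next
    case False
    then show ?thesis using a by (simp add: mod_eval)
  qed
qed

lemma clique_img:
  assumes u: "u < 6*m+1" and S: "S \<subseteq> {lo..lo + 6 * int m}" and S0: "0 \<in> S" "d \<in> S"
    and cond: "\<And>j k. j \<in> S \<Longrightarrow> k \<in> S \<Longrightarrow> j \<noteq> k \<Longrightarrow> \<not> (j = 0 \<and> k = d) \<Longrightarrow> \<not> (j = d \<and> k = 0)
       \<Longrightarrow> Aj m \<bar>k - j\<bar>"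
  shows "is_clique {0..<6*m+1} (add_edge (Gr m) u (wv m u d)) (wv m u ` S)"
    "card (wv m u ` S) = card S"
proof -
  show "card (wv m u ` S) = card S" using inj_wv[OF u S] by (simp add: card_image)
  have rng: "-(6 * int m + 1) < k - j \<and> k - j < 6 * int m + 1" if "j \<in> S" "k \<in> S" for j k
  proof -
    have "j \<in> {lo..lo + 6 * int m}" "k \<in> {lo..lo + 6 * int m}" using that S by auto
    then show ?thesis by auto
  qed
  show "is_clique {0..<6*m+1} (add_edge (Gr m) u (wv m u d)) (wv m u ` S)"
    unfolding is_clique_def
  proof (intro conjI ballI impI)
    show "wv m u ` S \<subseteq> {0..<6*m+1}" using wv_lt by auto
    fix x y assume xy: "x \<in> wv m u ` S" "y \<in> wv m u ` S" "x \<noteq> y"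
    then obtain j k where jk: "j \<in> S" "k \<in> S" "x = wv m u j" "y = wv m u k" by auto
    have jk2: "j \<noteq> k" using xy jk by auto
    show "add_edge (Gr m) u (wv m u d) x y"
    proof (cases "(j = 0 \<and> k = d) \<or> (j = d \<and> k = 0)")
      case True
      then show ?thesis unfolding add_edge_def using jk wv_0[OF u] by auto
    next
      case False
      then have "Aj m \<bar>k - j\<bar>" using cond[OF jk(1,2) jk2] by auto
      then have "Gr m x y" unfolding Gr_def jk fd_ww using Aj_mod_abs rng[OF jk(1,2)] by auto
      then show ?thesis unfolding add_edge_def by simp
    qed
  qed
qed

lemma indep_img:
  assumes u: "u < 6*m+1" and S: "S \<subseteq> {lo..lo + 6 * int m}" and S0: "0 \<in> S" "d \<in> S"
    and cond: "\<And>j k. j \<in> S \<Longrightarrow> k \<in> S \<Longrightarrow> j \<noteq> k \<Longrightarrow> \<not> (j = 0 \<and> k = d) \<Longrightarrow> \<not> (j = d \<and> k = 0)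
       \<Longrightarrow> \<not> Aj m \<bar>k - j\<bar>"
  shows "is_indep {0..<6*m+1} (del_edge (Gr m) u (wv m u d)) (wv m u ` S)"
    "card (wv m u ` S) = card S"
proof -
  show "card (wv m u ` S) = card S" using inj_wv[OF u S] by (simp add: card_image)
  have rng: "-(6 * int m + 1) < k - j \<and> k - j < 6 * int m + 1" if "j \<in> S" "k \<in> S" for j k
  proof -
    have "j \<in> {lo..lo + 6 * int m}" "k \<in> {lo..lo + 6 * int m}" using that S by auto
    then show ?thesis by auto
  qed
  show "is_indep {0..<6*m+1} (del_edge (Gr m) u (wv m u d)) (wv m u ` S)"
    unfolding is_indep_def
  proof (intro conjI ballI impI)
    show "wv m u ` S \<subseteq> {0..<6*m+1}" using wv_lt by auto
    fix x y assume xy: "x \<in> wv m u ` S" "y \<in> wv m u ` S" "x \<noteq> y"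
    then obtain j k where jk: "j \<in> S" "k \<in> S" "x = wv m u j" "y = wv m u k" by auto
    have jk2: "j \<noteq> k" using xy jk by auto
    show "\<not> del_edge (Gr m) u (wv m u d) x y"
    proof (cases "(j = 0 \<and> k = d) \<or> (j = d \<and> k = 0)")
      case True
      then show ?thesis unfolding del_edge_def using jk wv_0[OF u] by auto
    next
      case False
      then have "\<not> Aj m \<bar>k - j\<bar>" using cond[OF jk(1,2) jk2] by auto
      then have "\<not> Gr m x y" unfolding Gr_def jk fd_ww using Aj_mod_abs rng[OF jk(1,2)] by auto
      then show ?thesis unfolding del_edge_def by simp
    qed
  qed
qed

lemma nonedge_case:
  assumes m: "m \<ge> 2" and u: "u < 6*m+1" and d: "1 \<le> d" "d \<le> 2 * int m" "d \<noteq> int m"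
  shows "\<exists>K. is_clique {0..<6*m+1} (add_edge (Gr m) u (wv m u d)) K \<and> card K = 4"
proof (cases "d < int m")
  case True
  define S where "S = {0, d, d + 2 * int m + 1, d + 3 * int m + 1}"
  have S1: "S \<subseteq> {0..0 + 6 * int m}" unfolding S_def using d True by auto
  have S2: "0 \<in> S" "d \<in> S" unfolding S_def by auto
  have cS: "card S = 4" unfolding S_def using d True by auto
  have cond: "Aj m \<bar>k - j\<bar>" if "j \<in> S" "k \<in> S" "j \<noteq> k" "\<not> (j = 0 \<and> k = d)" "\<not> (j = d \<and> k = 0)" for j k
    using that d True m unfolding S_def Aj_def by auto
  show ?thesis using clique_img[OF u S1 S2 cond] cS by auto
next
  case False
  define S where "S = {0, d, - int m, d + int m}"
  have S1: "S \<subseteq> {- int m..- int m + 6 * int m}" unfolding S_def using d False by auto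
  have S2: "0 \<in> S" "d \<in> S" unfolding S_def by auto
  have cS: "card S = 4" unfolding S_def using d False m by auto
  have cond: "Aj m \<bar>k - j\<bar>" if "j \<in> S" "k \<in> S" "j \<noteq> k" "\<not> (j = 0 \<and> k = d)" "\<not> (j = d \<and> k = 0)" for j k
    using that d False m unfolding S_def Aj_def by auto
  show ?thesis using clique_img[OF u S1 S2 cond] cS by auto
qed

lemma edge_case_m:
  assumes m: "m \<ge> 2" and u: "u < 6*m+1"
  shows "\<exists>I. is_indep {0..<6*m+1} (del_edge (Gr m) u (wv m u (int m))) I \<and> card I = m + 2"
proof -
  define S where "S = {-1..0} \<union> {int m..2 * int m - 1}"
  have S1: "S \<subseteq> {-1..-1 + 6 * int m}" unfolding S_def using m by auto
  have S2: "0 \<in> S" "int m \<in> S" unfolding S_def using m by auto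
  have cS: "card S = m + 2"
  proof -
    have "card S = card {-1..(0::int)} + card {int m..2 * int m - 1}" unfolding S_def
      using m by (intro card_Un_disjoint) auto
    then show ?thesis by simp
  qed
  have m': "2 \<le> int m" using m by simp
  have cond: "\<not> Aj m \<bar>k - j\<bar>" if "j \<in> S" "k \<in> S" "j \<noteq> k" "\<not> (j = 0 \<and> k = int m)" "\<not> (j = int m \<and> k = 0)" for j k
  proof -
    have "(-1 \<le> j \<and> j \<le> 0 \<or> int m \<le> j \<and> j \<le> 2 * int m - 1)" "(-1 \<le> k \<and> k \<le> 0 \<or> int m \<le> k \<and> k \<le> 2 * int m - 1)"
      using that unfolding S_def by auto
    then show ?thesis using that(3-5) m' unfolding Aj_def by smt
  qed
  show ?thesis using indep_img[OF u S1 S2 cond] cS by auto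
qed

lemma edge_case_mid:
  assumes m: "m \<ge> 2" and u: "u < 6*m+1" and e: "1 \<le> e" "e \<le> int m - 1"
  shows "\<exists>I. is_indep {0..<6*m+1} (del_edge (Gr m) u (wv m u (2 * int m + e))) I \<and> card I = m + 2"
proof -
  define S where "S = insert 0 (insert (2 * int m) (insert (2 * int m + e) ({e..int m + e - 1} - {int m})))"
  have S1: "S \<subseteq> {0..0 + 6 * int m}" unfolding S_def using m e by auto
  have S2: "0 \<in> S" "2 * int m + e \<in> S" unfolding S_def using m by auto
  have cS: "card S = m + 2"
  proof -
    have c1: "card ({e..int m + e - 1} - {int m}) = m - 1" using e
      by (subst card_Diff_singleton) auto
    show ?thesis unfolding S_def using c1 e m by simp
  qed
  have m': "2 \<le> int m" using m by simp
  have cond: "\<not> Aj m \<bar>k - j\<bar>" if "j \<in> S" "k \<in> S" "j \<noteq> k" "\<not> (j = 0 \<and> k = 2 * int m + e)" "\<not> (j = 2 * int m + e \<and> k = 0)" for j k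
  proof -
    have "j = 0 \<or> j = 2 * int m \<or> j = 2 * int m + e \<or> (e \<le> j \<and> j \<le> int m + e - 1 \<and> j \<noteq> int m)"
      "k = 0 \<or> k = 2 * int m \<or> k = 2 * int m + e \<or> (e \<le> k \<and> k \<le> int m + e - 1 \<and> k \<noteq> int m)"
      using that unfolding S_def by auto
    then show ?thesis using that(3-5) m' e unfolding Aj_def by smt
  qed
  show ?thesis using indep_img[OF u S1 S2 cond] cS by auto
qed

lemma edge_case_3m:
  assumes m: "m \<ge> 2" and u: "u < 6*m+1"
  shows "\<exists>I. is_indep {0..<6*m+1} (del_edge (Gr m) u (wv m u (3 * int m))) I \<and> card I = m + 2"
proof -
  define S where "S = insert 0 (insert (3 * int m) {-2 * int m..- int m - 1})"
  have S1: "S \<subseteq> {-2 * int m..-2 * int m + 6 * int m}" unfolding S_def using m by auto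
  have S2: "0 \<in> S" "3 * int m \<in> S" unfolding S_def using m by auto
  have cS: "card S = m + 2" unfolding S_def using m by simp
  have m': "2 \<le> int m" using m by simp
  have cond: "\<not> Aj m \<bar>k - j\<bar>" if "j \<in> S" "k \<in> S" "j \<noteq> k" "\<not> (j = 0 \<and> k = 3 * int m)" "\<not> (j = 3 * int m \<and> k = 0)" for j k
  proof -
    have "j = 0 \<or> j = 3 * int m \<or> (-2 * int m \<le> j \<and> j \<le> - int m - 1)"
      "k = 0 \<or> k = 3 * int m \<or> (-2 * int m \<le> k \<and> k \<le> - int m - 1)"
      using that unfolding S_def by auto
    then show ?thesis using that(3-5) m' unfolding Aj_def by smt
  qed
  show ?thesis using indep_img[OF u S1 S2 cond] cS by auto
qed

lemma sat_small:
  assumes m: "m \<ge> 2" and u: "u < 6*m+1" and v: "v < 6*m+1" and d: "1 \<le> fd m u v" "fd m u v \<le> 3 * int m"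
  shows "(\<not> Gr m u v \<longrightarrow> \<not> R_good 4 (m+2) {0..<6*m+1} (add_edge (Gr m) u v)) \<and>
         (Gr m u v \<longrightarrow> \<not> R_good 4 (m+2) {0..<6*m+1} (del_edge (Gr m) u v))"
proof -
  define dd where "dd = fd m u v"
  have vw: "v = wv m u dd" unfolding dd_def using wv_fd[OF u v] by simp
  have g: "Gr m u v = Aj m dd" unfolding Gr_def dd_def ..
  have d': "1 \<le> dd" "dd \<le> 3 * int m" using d unfolding dd_def by auto
  show ?thesis
  proof (cases "Aj m dd")
    case True
    have "\<exists>I. is_indep {0..<6*m+1} (del_edge (Gr m) u v) I \<and> card I = m + 2"
    proof -
      have "dd = int m \<or> dd = 3 * int m \<or> (2 * int m + 1 \<le> dd \<and> dd \<le> 3 * int m - 1)"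
        using True d' unfolding Aj_def by auto
      moreover
      { assume "dd = int m" then have ?thesis using edge_case_m[OF m u] vw by simp }
      moreover
      { assume "dd = 3 * int m" then have ?thesis using edge_case_3m[OF m u] vw by simp }
      moreover
      { assume h: "2 * int m + 1 \<le> dd \<and> dd \<le> 3 * int m - 1"
        then have "1 \<le> dd - 2 * int m" "dd - 2 * int m \<le> int m - 1" by auto
        from edge_case_mid[OF m u this] have ?thesis using vw by simp }
      ultimately show ?thesis by blast
    qed
    then have "\<not> R_good 4 (m+2) {0..<6*m+1} (del_edge (Gr m) u v)" unfolding R_good_def by blast
    then show ?thesis using g True by simp
  next
    case False
    have "dd \<le> 2 * int m" "dd \<noteq> int m" using False d' unfolding Aj_def by auto
    from nonedge_case[OF m u d'(1) this] have "\<exists>K. is_clique {0..<6*m+1} (add_edge (Gr m) u v) K \<and> card K = 4"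
      using vw by simp
    then have "\<not> R_good 4 (m+2) {0..<6*m+1} (add_edge (Gr m) u v)" unfolding R_good_def by blast
    then show ?thesis using g False by simp
  qed
qed

lemma add_edge_sym: "add_edge E u v = add_edge E v u"
  unfolding add_edge_def by (auto simp: fun_eq_iff)

lemma del_edge_sym: "del_edge E u v = del_edge E v u"
  unfolding del_edge_def by (auto simp: fun_eq_iff)

lemma sat_all:
  assumes m: "m \<ge> 2" and u: "u < 6*m+1" and v: "v < 6*m+1" and uv: "u \<noteq> v"
  shows "(\<not> Gr m u v \<longrightarrow> \<not> R_good 4 (m+2) {0..<6*m+1} (add_edge (Gr m) u v)) \<and>
         (Gr m u v \<longrightarrow> \<not> R_good 4 (m+2) {0..<6*m+1} (del_edge (Gr m) u v))"
proof -
  have nz: "fd m u v \<noteq> 0" using fd_zero[OF u v] uv by simp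
  have r: "0 \<le> fd m u v" "fd m u v < 6 * int m + 1" using fd_range by auto
  show ?thesis
  proof (cases "fd m u v \<le> 3 * int m")
    case True
    have "1 \<le> fd m u v" using nz r by simp
    from sat_small[OF m u v this True] show ?thesis .
  next
    case False
    have sw: "fd m v u = 6 * int m + 1 - fd m u v" using fd_swap[OF u v uv] .
    have "1 \<le> fd m v u" "fd m v u \<le> 3 * int m" using sw r False by auto
    from sat_small[OF m v u this] show ?thesis
      using Gr_sym[OF u v] add_edge_sym[of "Gr m" u v] del_edge_sym[of "Gr m" u v] by simp
  qed
qed

theorem theorem1:
  fixes t :: nat
  assumes "t \<ge> 4"
  shows "\<exists>(V :: nat set) E. simple_graph V E \<and> card V = 6 * t - 11
           \<and> doubly_saturated_R_good 4 t V E"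
proof -
  define m where "m = t - 2"
  have m: "m \<ge> 2" unfolding m_def using assms by simp
  have tm: "t = m + 2" unfolding m_def using assms by simp
  have cV: "6 * t - 11 = 6 * m + 1" using tm m by simp
  have m1: "m \<ge> 1" using m by simp
  have c1: "\<not> (\<exists>K. is_clique {0..<6*m+1} (Gr m) K \<and> card K = 4)"
  proof
    assume "\<exists>K. is_clique {0..<6*m+1} (Gr m) K \<and> card K = 4"
    then obtain K where "is_clique {0..<6*m+1} (Gr m) K" "card K = 4" by blast
    then show False by (rule noK4[OF m1])
  qed
  have c2: "\<not> (\<exists>I. is_indep {0..<6*m+1} (Gr m) I \<and> card I = m + 2)"
  proof
    assume "\<exists>I. is_indep {0..<6*m+1} (Gr m) I \<and> card I = m + 2"
    then obtain I where "is_indep {0..<6*m+1} (Gr m) I" "card I = m + 2" by blast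
    then show False by (rule noIndep[OF m1])
  qed
  have rg: "R_good 4 (m+2) {0..<6*m+1} (Gr m)"
    unfolding R_good_def using c1 c2 by simp
  have ne: "\<not> Gr m 0 1" unfolding Gr_def fd_def Aj_def using m by simp
  have ed: "Gr m 0 m" unfolding Gr_def fd_def Aj_def using m by simp
  have ds: "doubly_saturated_R_good 4 (m+2) {0..<6*m+1} (Gr m)"
    unfolding doubly_saturated_R_good_def complete_graph_def edgeless_graph_def
  proof (intro conjI rg ballI impI)
    fix u v assume uv: "u \<in> {0..<6*m+1}" "v \<in> {0..<6*m+1}" "u \<noteq> v \<and> \<not> Gr m u v"
    have "u < 6*m+1" "v < 6*m+1" using uv by auto
    from conjunct1[OF sat_all[OF m this]] uv(3) show "\<not> R_good 4 (m + 2) {0..<6 * m + 1} (add_edge (Gr m) u v)"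
      by simp
  next
    fix u v assume uv: "u \<in> {0..<6*m+1}" "v \<in> {0..<6*m+1}" "Gr m u v"
    have uv2: "u \<noteq> v" using uv(3) Gr_irrefl[OF m1, of u] by metis
    have "u < 6*m+1" "v < 6*m+1" using uv by auto
    from conjunct2[OF sat_all[OF m this uv2]] uv(3) show "\<not> R_good 4 (m + 2) {0..<6 * m + 1} (del_edge (Gr m) u v)"
      by simp
  next
    show "\<not> (\<forall>u\<in>{0..<6 * m + 1}. \<forall>v\<in>{0..<6 * m + 1}. u \<noteq> v \<longrightarrow> Gr m u v)"
    proof
      assume h: "\<forall>u\<in>{0..<6 * m + 1}. \<forall>v\<in>{0..<6 * m + 1}. u \<noteq> v \<longrightarrow> Gr m u v"
      have a0: "(0::nat) \<in> {0..<6 * m + 1}" and a1: "(1::nat) \<in> {0..<6 * m + 1}" using m by auto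
      have "(0::nat) \<noteq> 1 \<longrightarrow> Gr m 0 1" using bspec[OF bspec[OF h a0] a1] .
      then have "Gr m 0 1" by simp
      then show False using ne by simp
    qed
  next
    show "\<not> (\<forall>u\<in>{0..<6 * m + 1}. \<forall>v\<in>{0..<6 * m + 1}. \<not> Gr m u v)"
    proof
      assume h: "\<forall>u\<in>{0..<6 * m + 1}. \<forall>v\<in>{0..<6 * m + 1}. \<not> Gr m u v"
      have a0: "(0::nat) \<in> {0..<6 * m + 1}" and a1: "m \<in> {0..<6 * m + 1}" using m by auto
      have "\<not> Gr m 0 m" using bspec[OF bspec[OF h a0] a1] .
      then show False using ed by simp
    qed
  qed
  have ds': "doubly_saturated_R_good 4 t {0..<6*m+1} (Gr m)" using ds tm by simp
  have cd: "card {0..<6*m+1} = 6 * t - 11" using cV by simp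
  have "simple_graph {0..<6*m+1} (Gr m) \<and> card {0..<6*m+1} = 6 * t - 11 \<and> doubly_saturated_R_good 4 t {0..<6*m+1} (Gr m)"
    using simple[OF m1] cd ds' by (intro conjI)
  then show ?thesis by (intro exI)
qed

end
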